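(* Let $Q$ be a finite quiver with arrow set $Q_1$ which is connected, has no loops or $2$-cycles, in which every vertex is the source of exactly two arrows and the target of exactly two arrows, and which is equipped with bijections $f,g:Q_1\to Q_1$ such that for every $\alpha\in Q_1$, $\{f(\alpha),g(\alpha)\}$ is the set of the two arrows starting at the target of $\alpha$, and $f^3=\mathrm{id}$. For $\alpha\in Q_1$ let $\bar\alpha$ be the other arrow with the same source as $\alpha$. Write $\mathrm{PSL}_2(\mathbb{Z})=\langle x,y\mid x^2=(xy)^3=1\rangle$. Then setting $x(\alpha)=\bar\alpha$ and $y(\alpha)=g(\alpha)$ defines an action of $\mathrm{PSL}_2(\mathbb{Z})$ on $Q_1$ (in which $xy$ acts as $f$); this action is transitive, and the subgroup of elements acting trivially is normal of finite index. *)

theory Defs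
  imports "HOL-Algebra.Coset" "HOL-Algebra.Bij"
begin

definition quiver_connected :: "'v set \<Rightarrow> 'a set \<Rightarrow> ('a \<Rightarrow> 'v) \<Rightarrow> ('a \<Rightarrow> 'v) \<Rightarrow> bool" where
  "quiver_connected V A s t \<longleftrightarrow>
     (let E = (\<lambda>\<alpha>. (s \<alpha>, t \<alpha>)) ` A in \<forall>u\<in>V. \<forall>v\<in>V. (u, v) \<in> (E \<union> E\<inverse>)\<^sup>*)"

definition other_arrow :: "'a set \<Rightarrow> ('a \<Rightarrow> 'v) \<Rightarrow> 'a \<Rightarrow> 'a" where
  "other_arrow A s \<alpha> = (THE \<beta>. \<beta> \<in> A \<and> s \<beta> = s \<alpha> \<and> \<beta> \<noteq> \<alpha>)"

datatype gen = gx | gy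

text \<open>A letter is a generator together with a flag: True means the inverse of the generator.\<close>
type_synonym letter = "gen \<times> bool"

inductive psl_rel :: "letter list \<Rightarrow> letter list \<Rightarrow> bool" where
  refl: "psl_rel w w"
| sym: "psl_rel u v \<Longrightarrow> psl_rel v u"
| trans: "psl_rel u v \<Longrightarrow> psl_rel v w \<Longrightarrow> psl_rel u w"
| cong: "psl_rel u v \<Longrightarrow> psl_rel (a @ u @ b) (a @ v @ b)"
| cancel: "psl_rel [(c, e), (c, \<not> e)] []"
| rel_x: "psl_rel [(gx, False), (gx, False)] []"
| rel_xy: "psl_rel (concat (replicate 3 [(gx, False), (gy, False)])) []"

definition PSL2Z :: "letter list set monoid" where
  "PSL2Z = \<lparr> carrier = UNIV // {(u, v). psl_rel u v},
             mult = (\<lambda>P R. {w. \<exists>u\<in>P. \<exists>v\<in>R. psl_rel (u @ v) w}),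
             one = {w. psl_rel [] w} \<rparr>"

definition psl_x :: "letter list set" where
  "psl_x = {w. psl_rel [(gx, False)] w}"

definition psl_y :: "letter list set" where
  "psl_y = {w. psl_rel [(gy, False)] w}"

end

theory Submission
  imports Defs
begin

definition cl :: "letter list \<Rightarrow> letter list set" where
  "cl u = {w. psl_rel u w}"

lemma carrier_PSL: "carrier PSL2Z = range cl"
  unfolding PSL2Z_def cl_def quotient_def by auto

lemma cl_eq: "cl u = cl v \<longleftrightarrow> psl_rel u v"
proof
  assume "cl u = cl v"
  then have "v \<in> cl u" by (simp add: cl_def psl_rel.refl)
  then show "psl_rel u v" by (simp add: cl_def)
next
  assume h: "psl_rel u v"
  show "cl u = cl v" unfolding cl_def
    using h by (auto intro: psl_rel.trans psl_rel.sym)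
qed

lemma psl_append: "psl_rel u u' \<Longrightarrow> psl_rel v v' \<Longrightarrow> psl_rel (u@v) (u'@v')"
proof -
  assume a: "psl_rel u u'" and b: "psl_rel v v'"
  have "psl_rel ([]@u@v) ([]@u'@v)" by (rule psl_rel.cong[OF a])
  moreover have "psl_rel (u'@v@[]) (u'@v'@[])" by (rule psl_rel.cong[OF b])
  ultimately show ?thesis by (auto intro: psl_rel.trans)
qed

lemma mult_cl: "cl u \<otimes>\<^bsub>PSL2Z\<^esub> cl v = cl (u@v)"
proof -
  have "{w. \<exists>u'\<in>cl u. \<exists>v'\<in>cl v. psl_rel (u'@v') w} = cl (u@v)"
    unfolding cl_def
    by (auto intro: psl_rel.trans psl_append psl_rel.refl psl_rel.sym)
  then show ?thesis by (simp add: PSL2Z_def)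
qed

lemma one_cl: "\<one>\<^bsub>PSL2Z\<^esub> = cl []"
  by (simp add: PSL2Z_def cl_def)

definition invw :: "letter list \<Rightarrow> letter list" where
  "invw u = rev (map (\<lambda>(c,e). (c, \<not> e)) u)"

lemma invw_rel: "psl_rel (invw u @ u) []"
proof (induction u)
  case Nil
  then show ?case by (simp add: invw_def psl_rel.refl)
next
  case (Cons l u)
  obtain c e where l: "l = (c,e)" by (cases l)
  have "psl_rel [(c, \<not>e), (c, \<not>\<not>e)] []" by (rule psl_rel.cancel)
  then have "psl_rel (invw u @ [(c, \<not>e), (c, e)] @ u) (invw u @ [] @ u)"
    by (intro psl_rel.cong) simp
  moreover have "invw (l#u) @ l # u = invw u @ [(c, \<not>e), (c, e)] @ u"
    by (simp add: invw_def l)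
  ultimately show ?case using Cons by (auto intro: psl_rel.trans)
qed

lemma group_PSL: "group PSL2Z"
proof (rule groupI)
  fix x y assume "x \<in> carrier PSL2Z" "y \<in> carrier PSL2Z"
  then show "x \<otimes>\<^bsub>PSL2Z\<^esub> y \<in> carrier PSL2Z"
    by (auto simp: carrier_PSL mult_cl)
next
  show "\<one>\<^bsub>PSL2Z\<^esub> \<in> carrier PSL2Z" by (simp add: carrier_PSL one_cl)
next
  fix x y z assume "x \<in> carrier PSL2Z" "y \<in> carrier PSL2Z" "z \<in> carrier PSL2Z"
  then show "x \<otimes>\<^bsub>PSL2Z\<^esub> y \<otimes>\<^bsub>PSL2Z\<^esub> z = x \<otimes>\<^bsub>PSL2Z\<^esub> (y \<otimes>\<^bsub>PSL2Z\<^esub> z)"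
    by (auto simp: carrier_PSL mult_cl)
next
  fix x assume "x \<in> carrier PSL2Z"
  then show "\<one>\<^bsub>PSL2Z\<^esub> \<otimes>\<^bsub>PSL2Z\<^esub> x = x"
    by (auto simp: carrier_PSL mult_cl one_cl)
next
  fix x assume "x \<in> carrier PSL2Z"
  then obtain u where x: "x = cl u" by (auto simp: carrier_PSL)
  have "cl (invw u) \<otimes>\<^bsub>PSL2Z\<^esub> x = \<one>\<^bsub>PSL2Z\<^esub>"
    using invw_rel by (simp add: x mult_cl one_cl cl_eq)
  then show "\<exists>y\<in>carrier PSL2Z. y \<otimes>\<^bsub>PSL2Z\<^esub> x = \<one>\<^bsub>PSL2Z\<^esub>"
    by (auto simp: carrier_PSL)
qed

fun lp :: "'a set \<Rightarrow> ('a \<Rightarrow> 'v) \<Rightarrow> ('a \<Rightarrow> 'a) \<Rightarrow> letter \<Rightarrow> 'a \<Rightarrow> 'a" where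
  "lp A s g (gx, e) = other_arrow A s"
| "lp A s g (gy, False) = g"
| "lp A s g (gy, True) = inv_into A g"

fun evw :: "'a set \<Rightarrow> ('a \<Rightarrow> 'v) \<Rightarrow> ('a \<Rightarrow> 'a) \<Rightarrow> letter list \<Rightarrow> 'a \<Rightarrow> 'a" where
  "evw A s g [] = id"
| "evw A s g (l # w) = lp A s g l \<circ> evw A s g w"

lemma evw_append: "evw A s g (u @ v) = evw A s g u \<circ> evw A s g v"
  by (induction u) auto

locale Q =
  fixes V :: "'v set" and A :: "'a set" and s t :: "'a \<Rightarrow> 'v" and f g :: "'a \<Rightarrow> 'a"
  assumes src: "s ` A \<subseteq> V" and tgt: "t ` A \<subseteq> V"
    and out2: "\<forall>v\<in>V. card {\<alpha>\<in>A. s \<alpha> = v} = 2"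
    and f_bij: "bij_betw f A A" and g_bij: "bij_betw g A A"
    and fg: "\<forall>\<alpha>\<in>A. {f \<alpha>, g \<alpha>} = {\<beta>\<in>A. s \<beta> = t \<alpha>}"
    and f3: "\<forall>\<alpha>\<in>A. f (f (f \<alpha>)) = \<alpha>"
begin

abbreviation "oth \<equiv> other_arrow A s"

lemma other_props:
  assumes a: "\<alpha> \<in> A"
  shows "oth \<alpha> \<in> A \<and> s (oth \<alpha>) = s \<alpha> \<and> oth \<alpha> \<noteq> \<alpha>"
    and "\<And>\<beta>. \<beta> \<in> A \<Longrightarrow> s \<beta> = s \<alpha> \<Longrightarrow> \<beta> \<noteq> \<alpha> \<Longrightarrow> \<beta> = oth \<alpha>"
proof -
  have "card {\<beta>\<in>A. s \<beta> = s \<alpha>} = 2" using out2 src a by auto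
  then obtain x y where xy: "{\<beta>\<in>A. s \<beta> = s \<alpha>} = {x, y}" "x \<noteq> y"
    by (auto simp: card_2_iff)
  have "\<alpha> \<in> {x,y}" using a xy(1) by blast
  then have ex: "\<exists>!\<beta>. \<beta> \<in> A \<and> s \<beta> = s \<alpha> \<and> \<beta> \<noteq> \<alpha>"
  proof -
    have "\<exists>!\<beta>. \<beta> \<in> {x,y} \<and> \<beta> \<noteq> \<alpha>" using \<open>\<alpha> \<in> {x,y}\<close> xy(2) by auto
    moreover have "\<And>\<beta>. (\<beta> \<in> {x,y}) = (\<beta> \<in> A \<and> s \<beta> = s \<alpha>)" using xy(1) by blast
    ultimately show ?thesis by simp
  qed
  have "oth \<alpha> \<in> A \<and> s (oth \<alpha>) = s \<alpha> \<and> oth \<alpha> \<noteq> \<alpha>"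
    unfolding other_arrow_def by (rule theI'[OF ex])
  then show "oth \<alpha> \<in> A \<and> s (oth \<alpha>) = s \<alpha> \<and> oth \<alpha> \<noteq> \<alpha>" .
  fix \<beta> assume "\<beta> \<in> A" "s \<beta> = s \<alpha>" "\<beta> \<noteq> \<alpha>"
  then show "\<beta> = oth \<alpha>"
    using ex \<open>oth \<alpha> \<in> A \<and> s (oth \<alpha>) = s \<alpha> \<and> oth \<alpha> \<noteq> \<alpha>\<close> by blast
qed

lemma other_other: "\<alpha> \<in> A \<Longrightarrow> oth (oth \<alpha>) = \<alpha>"
proof -
  assume a: "\<alpha> \<in> A"
  have h: "oth \<alpha> \<in> A \<and> s (oth \<alpha>) = s \<alpha> \<and> oth \<alpha> \<noteq> \<alpha>" by (rule other_props(1)[OF a])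
  have "\<alpha> = oth (oth \<alpha>)"
    by (rule other_props(2)[of "oth \<alpha>" \<alpha>]) (use h a in auto)
  then show ?thesis by simp
qed

lemma fg_props:
  assumes a: "\<alpha> \<in> A"
  shows "f \<alpha> \<in> A" "g \<alpha> \<in> A" "s (f \<alpha>) = t \<alpha>" "s (g \<alpha>) = t \<alpha>" "f \<alpha> \<noteq> g \<alpha>"
proof -
  have e: "{f \<alpha>, g \<alpha>} = {\<beta>\<in>A. s \<beta> = t \<alpha>}" using fg a by auto
  have "f \<alpha> \<in> {\<beta>\<in>A. s \<beta> = t \<alpha>}" "g \<alpha> \<in> {\<beta>\<in>A. s \<beta> = t \<alpha>}"
    by (simp_all only: e[symmetric]) simp_all
  then show "f \<alpha> \<in> A" "g \<alpha> \<in> A" "s (f \<alpha>) = t \<alpha>" "s (g \<alpha>) = t \<alpha>" by simp_all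
  have "card {\<beta>\<in>A. s \<beta> = t \<alpha>} = 2" using out2 tgt a by auto
  then show "f \<alpha> \<noteq> g \<alpha>"
  proof (intro notI)
    assume c2: "card {\<beta>\<in>A. s \<beta> = t \<alpha>} = 2" and eq: "f \<alpha> = g \<alpha>"
    have "{\<beta>\<in>A. s \<beta> = t \<alpha>} = {g \<alpha>}" using e eq by simp
    then show False using c2 by simp
  qed
qed

lemma other_g: "\<alpha> \<in> A \<Longrightarrow> oth (g \<alpha>) = f \<alpha>"
proof -
  assume a: "\<alpha> \<in> A"
  note h = fg_props[OF a]
  have "f \<alpha> = oth (g \<alpha>)"
    by (rule other_props(2)[of "g \<alpha>" "f \<alpha>"]) (use h in auto)
  then show ?thesis by simp
qed

lemma oth_bij: "bij_betw oth A A"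
  by (rule bij_betw_byWitness[where f'=oth]) (auto simp: other_other other_props)

lemma lp_bij: "bij_betw (lp A s g l) A A"
proof -
  obtain c e where l: "l = (c,e)" by (cases l)
  show ?thesis
    using oth_bij g_bij bij_betw_inv_into[OF g_bij]
    by (cases c; cases e) (auto simp: l)
qed

lemma evw_bij: "bij_betw (evw A s g w) A A"
proof (induction w)
  case Nil
  then show ?case by (simp add: bij_betw_id[unfolded id_def])
next
  case (Cons l w)
  have "bij_betw (lp A s g l \<circ> evw A s g w) A A"
    using bij_betw_trans[OF Cons lp_bij[of l]] .
  then show ?case by (simp only: evw.simps)
qed

lemma evw_in: "\<alpha> \<in> A \<Longrightarrow> evw A s g w \<alpha> \<in> A"
  using evw_bij bij_betwE by blast

lemma evw_rel: "psl_rel u v \<Longrightarrow> \<forall>\<alpha>\<in>A. evw A s g u \<alpha> = evw A s g v \<alpha>"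
proof (induction rule: psl_rel.induct)
  case (cong u v a b)
  then show ?case by (simp add: evw_append evw_in)
next
  case (cancel c e)
  have gi: "\<alpha> \<in> A \<Longrightarrow> g (inv_into A g \<alpha>) = \<alpha>" for \<alpha>
    using g_bij by (simp add: bij_betw_def f_inv_into_f)
  have ig: "\<alpha> \<in> A \<Longrightarrow> inv_into A g (g \<alpha>) = \<alpha>" for \<alpha>
    using g_bij by (simp add: bij_betw_def inv_into_f_f)
  show ?case by (cases c; cases e) (auto simp: other_other gi ig)
next
  case rel_x
  then show ?case by (simp add: other_other)
next
  case rel_xy
  show ?case
    by (simp add: eval_nat_numeral other_g fg_props f3)
qed auto

definition phi :: "letter list set \<Rightarrow> 'a \<Rightarrow> 'a" where
  "phi P = restrict (evw A s g (SOME u. u \<in> P)) A"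

lemma phi_cl: "phi (cl u) = restrict (evw A s g u) A"
proof -
  have "(SOME w. w \<in> cl u) \<in> cl u" by (rule someI[of _ u]) (simp add: cl_def psl_rel.refl)
  then have "psl_rel u (SOME w. w \<in> cl u)" by (simp add: cl_def)
  then show ?thesis unfolding phi_def using evw_rel by (auto intro!: restrict_ext)
qed

lemma phi_Bij: "phi (cl u) \<in> Bij A"
  using evw_bij[of u] by (simp add: phi_cl Bij_def bij_betw_def inj_on_def image_def)

lemma phi_hom: "phi \<in> hom PSL2Z (BijGroup A)"
proof -
  have "phi (cl u \<otimes>\<^bsub>PSL2Z\<^esub> cl v) = phi (cl u) \<otimes>\<^bsub>BijGroup A\<^esub> phi (cl v)" for u v
  proof -
    have "phi (cl u) \<otimes>\<^bsub>BijGroup A\<^esub> phi (cl v) = compose A (phi (cl u)) (phi (cl v))"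
      using phi_Bij by (simp add: BijGroup_def)
    also have "\<dots> = restrict (evw A s g (u@v)) A"
      by (auto simp: compose_def phi_cl evw_append evw_in)
    finally show ?thesis by (simp add: mult_cl phi_cl)
  qed
  then show ?thesis
    by (auto simp: hom_def carrier_PSL phi_Bij BijGroup_def)
qed

lemma trans_action:
  assumes conn: "quiver_connected V A s t" and a0: "\<alpha>0 \<in> A" and b: "\<beta> \<in> A"
  shows "\<exists>w. evw A s g w \<alpha>0 = \<beta>"
proof -
  define T where "T = {evw A s g w \<alpha>0 | w. True}"
  have TA: "\<gamma> \<in> T \<Longrightarrow> \<gamma> \<in> A" for \<gamma> using evw_in a0 by (auto simp: T_def)
  have To: "\<gamma> \<in> T \<Longrightarrow> oth \<gamma> \<in> T" for \<gamma>
  proof -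
    assume "\<gamma> \<in> T"
    then obtain w where w: "\<gamma> = evw A s g w \<alpha>0" by (auto simp: T_def)
    have "oth \<gamma> = evw A s g ((gx,False) # w) \<alpha>0" by (simp add: w)
    then show ?thesis unfolding T_def by blast
  qed
  have Tg: "\<gamma> \<in> T \<Longrightarrow> g \<gamma> \<in> T" for \<gamma>
  proof -
    assume "\<gamma> \<in> T"
    then obtain w where w: "\<gamma> = evw A s g w \<alpha>0" by (auto simp: T_def)
    have "g \<gamma> = evw A s g ((gy,False) # w) \<alpha>0" by (simp add: w)
    then show ?thesis unfolding T_def by blast
  qed
  have Tf: "\<gamma> \<in> T \<Longrightarrow> f \<gamma> \<in> T" for \<gamma>
  proof -
    assume h: "\<gamma> \<in> T"
    have "f \<gamma> = oth (g \<gamma>)" using other_g[OF TA[OF h]] by simp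
    then show ?thesis using To[OF Tg[OF h]] by simp
  qed
  define S where "S = {v. \<forall>\<beta>\<in>A. s \<beta> = v \<longrightarrow> \<beta> \<in> T}"
  have Sa: "\<gamma> \<in> T \<Longrightarrow> s \<gamma> \<in> S" for \<gamma>
  proof -
    assume h: "\<gamma> \<in> T"
    have "\<beta> \<in> T" if "\<beta> \<in> A" "s \<beta> = s \<gamma>" for \<beta>
    proof (cases "\<beta> = \<gamma>")
      case True then show ?thesis using h by simp
    next
      case False
      then have "\<beta> = oth \<gamma>" using other_props(2)[OF TA[OF h] that] by simp
      then show ?thesis using To[OF h] by simp
    qed
    then show ?thesis unfolding S_def by blast
  qed
  have Sb: "\<gamma> \<in> A \<Longrightarrow> s \<gamma> \<in> S \<Longrightarrow> t \<gamma> \<in> S" for \<gamma>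
  proof -
    assume g: "\<gamma> \<in> A" "s \<gamma> \<in> S"
    then have "\<gamma> \<in> T" by (simp add: S_def)
    have "\<beta> \<in> T" if "\<beta> \<in> A" "s \<beta> = t \<gamma>" for \<beta>
    proof -
      have "\<beta> \<in> {f \<gamma>, g \<gamma>}" using fg g(1) that by auto
      then show ?thesis using Tf[OF \<open>\<gamma> \<in> T\<close>] Tg[OF \<open>\<gamma> \<in> T\<close>] by auto
    qed
    then show ?thesis unfolding S_def by blast
  qed
  have Sc: "\<gamma> \<in> A \<Longrightarrow> t \<gamma> \<in> S \<Longrightarrow> s \<gamma> \<in> S" for \<gamma>
  proof -
    assume g: "\<gamma> \<in> A" "t \<gamma> \<in> S"
    then have "f \<gamma> \<in> T" using fg_props[OF g(1)] by (simp add: S_def)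
    then have "f (f (f \<gamma>)) \<in> T" using Tf by blast
    then show ?thesis using f3 g Sa by auto
  qed
  define E where "E = (\<lambda>\<alpha>. (s \<alpha>, t \<alpha>)) ` A"
  have "(s \<alpha>0, s \<beta>) \<in> (E \<union> E\<inverse>)\<^sup>*"
    using conn src a0 b unfolding quiver_connected_def E_def Let_def by blast
  moreover have "s \<alpha>0 \<in> S" using Sa[of \<alpha>0] by (simp add: T_def) (metis evw.simps(1) id_apply)
  ultimately have "s \<beta> \<in> S"
  proof (induction rule: rtrancl_induct)
    case base
    then show ?case .
  next
    case (step y z)
    then show ?case using Sb Sc unfolding E_def by auto
  qed
  then have "\<beta> \<in> T" using b by (simp add: S_def)
  then show ?thesis by (auto simp: T_def)
qed

end

theorem proposition3p3:
  fixes V :: "'v set" and A :: "'a set" and s t :: "'a \<Rightarrow> 'v" and f g :: "'a \<Rightarrow> 'a"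
  assumes finV: "finite V" and finA: "finite A"
    and src: "s ` A \<subseteq> V" and tgt: "t ` A \<subseteq> V"
    and conn: "quiver_connected V A s t"
    and no_loops: "\<forall>\<alpha>\<in>A. s \<alpha> \<noteq> t \<alpha>"
    and no_2cycles: "\<not> (\<exists>\<alpha>\<in>A. \<exists>\<beta>\<in>A. s \<alpha> = t \<beta> \<and> t \<alpha> = s \<beta>)"
    and out2: "\<forall>v\<in>V. card {\<alpha>\<in>A. s \<alpha> = v} = 2"
    and in2: "\<forall>v\<in>V. card {\<alpha>\<in>A. t \<alpha> = v} = 2"
    and f_bij: "bij_betw f A A" and g_bij: "bij_betw g A A"
    and fg: "\<forall>\<alpha>\<in>A. {f \<alpha>, g \<alpha>} = {\<beta>\<in>A. s \<beta> = t \<alpha>}"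
    and f3: "\<forall>\<alpha>\<in>A. f (f (f \<alpha>)) = \<alpha>"
  shows "\<exists>\<phi>. \<phi> \<in> hom PSL2Z (BijGroup A)
           \<and> \<phi> psl_x = restrict (other_arrow A s) A
           \<and> \<phi> psl_y = restrict g A
           \<and> \<phi> (psl_x \<otimes>\<^bsub>PSL2Z\<^esub> psl_y) = restrict f A
           \<and> (\<forall>\<alpha>\<in>A. \<forall>\<beta>\<in>A. \<exists>h\<in>carrier PSL2Z. \<phi> h \<alpha> = \<beta>)
           \<and> kernel PSL2Z (BijGroup A) \<phi> \<lhd> PSL2Z
           \<and> finite (rcosets\<^bsub>PSL2Z\<^esub> (kernel PSL2Z (BijGroup A) \<phi>))"
proof -
  interpret Q V A s t f g
    using src tgt out2 f_bij g_bij fg f3 by unfold_locales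
  interpret GH: group_hom PSL2Z "BijGroup A" phi
    by (simp add: group_hom_def group_hom_axioms_def group_PSL group_BijGroup phi_hom)
  have px: "psl_x = cl [(gx, False)]" by (simp add: psl_x_def cl_def)
  have py: "psl_y = cl [(gy, False)]" by (simp add: psl_y_def cl_def)
  have h1: "phi psl_x = restrict (other_arrow A s) A" by (simp add: px phi_cl)
  have h2: "phi psl_y = restrict g A" by (simp add: py phi_cl)
  have h3: "phi (psl_x \<otimes>\<^bsub>PSL2Z\<^esub> psl_y) = restrict f A"
    by (auto simp: px py mult_cl phi_cl other_g)
  have h4: "\<forall>\<alpha>\<in>A. \<forall>\<beta>\<in>A. \<exists>h\<in>carrier PSL2Z. phi h \<alpha> = \<beta>"
  proof (intro ballI)
    fix \<alpha> \<beta> assume a: "\<alpha> \<in> A" "\<beta> \<in> A"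
    then obtain w where "evw A s g w \<alpha> = \<beta>" using trans_action[OF conn] by blast
    then show "\<exists>h\<in>carrier PSL2Z. phi h \<alpha> = \<beta>"
      using a by (intro bexI[of _ "cl w"]) (auto simp: phi_cl carrier_PSL)
  qed
  have finB: "finite (carrier (BijGroup A))"
  proof (rule finite_subset)
    show "finite (PiE A (\<lambda>_. A))" by (rule finite_PiE) (use finA in auto)
  next
    show "carrier (BijGroup A) \<subseteq> PiE A (\<lambda>_. A)"
      by (auto simp: BijGroup_def Bij_def PiE_def bij_betw_def)
  qed
  have "(\<lambda>X. the_elem (phi ` X)) ` carrier (PSL2Z Mod kernel PSL2Z (BijGroup A) phi)
          \<subseteq> carrier (BijGroup A)"
    using GH.FactGroup_hom by (auto simp: hom_def)
  then have "finite ((\<lambda>X. the_elem (phi ` X)) ` carrier (PSL2Z Mod kernel PSL2Z (BijGroup A) phi))"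
    using finB finite_subset by blast
  then have "finite (carrier (PSL2Z Mod kernel PSL2Z (BijGroup A) phi))"
    using GH.FactGroup_inj_on finite_imageD by blast
  then have h5: "finite (rcosets\<^bsub>PSL2Z\<^esub> (kernel PSL2Z (BijGroup A) phi))"
    by (simp add: FactGroup_def)
  show ?thesis
    using h1 h2 h3 h4 h5 GH.normal_kernel phi_hom by blast
qed

end
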